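(* For every product distribution $\mathcal{D}=\prod_{r=1}^d\mathcal{D}_r$ on $[n]^d$, $\Delta(\mathcal{D})\le 5\,\Delta^*(\mathcal{D})$.
   Context: For a distribution $\mathcal{D}_r$ on $[n]$ with mass function $\mu$, the median BST $T_r$ is built recursively: for an interval $I$ of integers, its root is the smallest $t\in I$ with $\mu(\{s\in I:s\le t\})\ge\mu(I)/2$, and the left and right subtrees are the median BSTs of $\{s\in I:s<t\}$ and $\{s\in I:s>t\}$ (empty intervals give empty trees); $T_r$ is the median BST of $[n]$. Depth of a node is the number of edges to the root. $\Delta(\mathcal{D})=\sum_{r=1}^d\mathbb{E}_{x\sim\mathcal{D}_r}[\mathrm{depth}_{T_r}(x)]$, and $\Delta^*(\mathcal{D})=\sum_{r=1}^d\min_T\mathbb{E}_{x\sim\mathcal{D}_r}[\mathrm{depth}_T(x)]$, the minimum over all binary search trees $T$ on $[n]$. *)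

theory Defs
  imports Complex_Main "HOL-Library.Tree"
begin

text \<open>Root choice for the median BST of the half-open integer interval [a, b).
  The disjunct t = b - 1 only matters if the mass of the interval is negative,
  which never happens for a probability mass function (then t = b - 1 already
  satisfies the median condition); it just makes the definition total.\<close>

definition med_root :: "(nat \<Rightarrow> real) \<Rightarrow> nat \<Rightarrow> nat \<Rightarrow> nat" where
  "med_root \<mu> a b = (LEAST t. a \<le> t \<and> t < b \<and>
      (t = b - 1 \<or> (\<Sum>s\<in>{a..t}. \<mu> s) \<ge> (\<Sum>s\<in>{a..<b}. \<mu> s) / 2))"

lemma med_root_range: "a < b \<Longrightarrow> a \<le> med_root \<mu> a b \<and> med_root \<mu> a b < b"
  unfolding med_root_def
  by (rule LeastI2[where a = "b - 1"]) auto

function med_tree :: "(nat \<Rightarrow> real) \<Rightarrow> nat \<Rightarrow> nat \<Rightarrow> nat tree" where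
  "med_tree \<mu> a b = (if b \<le> a then Leaf else
     Node (med_tree \<mu> a (med_root \<mu> a b)) (med_root \<mu> a b)
          (med_tree \<mu> (Suc (med_root \<mu> a b)) b))"
  by pat_completeness auto
termination
  by (relation "measure (\<lambda>(\<mu>, a, b). b - a)")
     (auto, (metis med_root_range not_le diff_less_mono),
      (metis med_root_range not_le diff_less_mono2 le_imp_less_Suc))

definition median_bst :: "(nat \<Rightarrow> real) \<Rightarrow> nat \<Rightarrow> nat tree" where
  "median_bst \<mu> n = med_tree \<mu> 1 (Suc n)"

fun depth :: "nat \<Rightarrow> nat tree \<Rightarrow> nat" where
  "depth x Leaf = 0"
| "depth x (Node l y r) = (if x = y then 0 else if x < y then Suc (depth x l) else Suc (depth x r))"

definition exp_depth :: "(nat \<Rightarrow> real) \<Rightarrow> nat \<Rightarrow> nat tree \<Rightarrow> real" where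
  "exp_depth \<mu> n T = (\<Sum>x\<in>{1..n}. \<mu> x * real (depth x T))"

definition bsts_on :: "nat \<Rightarrow> nat tree set" where
  "bsts_on n = {T. bst T \<and> set_tree T = {1..n}}"

text \<open>\<mu> r is the mass function of the marginal D_r.\<close>
definition Delta :: "(nat \<Rightarrow> nat \<Rightarrow> real) \<Rightarrow> nat \<Rightarrow> nat \<Rightarrow> real" where
  "Delta \<mu> d n = (\<Sum>r\<in>{1..d}. exp_depth (\<mu> r) n (median_bst (\<mu> r) n))"

definition Delta_opt :: "(nat \<Rightarrow> nat \<Rightarrow> real) \<Rightarrow> nat \<Rightarrow> nat \<Rightarrow> real" where
  "Delta_opt \<mu> d n = (\<Sum>r\<in>{1..d}. Min (exp_depth (\<mu> r) n ` bsts_on n))"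

end

theory Submission
  imports Defs
begin

fun dA :: "nat set \<Rightarrow> nat \<Rightarrow> nat tree \<Rightarrow> nat" where
  "dA A x Leaf = 0"
| "dA A x (Node l y r) = (if x = y then 0 else (if y \<in> A then 1 else 0) + (if x < y then dA A x l else dA A x r))"

lemma dA_union: "A \<inter> B = {} \<Longrightarrow> dA (A \<union> B) x T = dA A x T + dA B x T"
  by (induction T) auto

lemma dA_mono: "A \<subseteq> B \<Longrightarrow> dA A x T \<le> dA B x T"
  by (induction T) auto

lemma dA_depth: "set_tree T \<subseteq> A \<Longrightarrow> dA A x T = depth x T"
  by (induction T) auto

lemma dA_root: "bst T \<Longrightarrow> a < b \<Longrightarrow> {a..<b} \<subseteq> set_tree T \<Longrightarrow>
   \<exists>r\<in>{a..<b}. \<forall>x\<in>{a..<b}. x \<noteq> r \<longrightarrow> 1 \<le> dA {r} x T"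
proof (induction T)
  case Leaf
  then show ?case by auto
next
  case (Node l y r)
  show ?case
  proof (cases "a \<le> y \<and> y < b")
    case True
    then show ?thesis by (intro bexI[of _ y]) auto
  next
    case False
    show ?thesis
    proof (cases "y < a")
      case True
      have "{a..<b} \<subseteq> set_tree r" using Node.prems True by fastforce
      then obtain r0 where r0: "r0 \<in> {a..<b}" "\<forall>x\<in>{a..<b}. x \<noteq> r0 \<longrightarrow> 1 \<le> dA {r0} x r"
        using Node by auto
      show ?thesis using r0 True by (intro bexI[of _ r0]) auto
    next
      case False
      then have yb: "b \<le> y" using \<open>\<not> (a \<le> y \<and> y < b)\<close> by auto
      have "{a..<b} \<subseteq> set_tree l" using Node.prems yb by fastforce
      then obtain r0 where r0: "r0 \<in> {a..<b}" "\<forall>x\<in>{a..<b}. x \<noteq> r0 \<longrightarrow> 1 \<le> dA {r0} x l"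
        using Node by auto
      show ?thesis using r0 yb by (intro bexI[of _ r0]) auto
    qed
  qed
qed

lemma sum_split3: "a \<le> m \<Longrightarrow> m < b \<Longrightarrow>
  (\<Sum>x\<in>{a..<b}. h x) = (\<Sum>x\<in>{a..<m}. h x) + h m + (\<Sum>x\<in>{Suc m..<b}. h x)"
proof -
  assume "a \<le> m" "m < b"
  then have "{a..<b} = {a..<m} \<union> insert m {Suc m..<b}" by auto
  then show ?thesis by (simp add: sum.union_disjoint algebra_simps)
qed

lemma med_facts:
  assumes ab: "a < b" and nn: "\<forall>x\<in>{a..<b}. \<mu> x \<ge> 0"
  defines "m \<equiv> med_root \<mu> a b"
  shows "(\<Sum>s\<in>{a..m}. \<mu> s) \<ge> (\<Sum>s\<in>{a..<b}. \<mu> s) / 2"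
    and "a < m \<Longrightarrow> (\<Sum>s\<in>{a..<m}. \<mu> s) < (\<Sum>s\<in>{a..<b}. \<mu> s) / 2"
proof -
  define Q where "Q = (\<lambda>t. a \<le> t \<and> t < b \<and> (t = b - 1 \<or> (\<Sum>s\<in>{a..t}. \<mu> s) \<ge> (\<Sum>s\<in>{a..<b}. \<mu> s) / 2))"
  have mQ: "m = Least Q" unfolding m_def med_root_def Q_def by simp
  have "Q (b - 1)" unfolding Q_def using ab by auto
  then have P: "Q m" unfolding mQ by (rule LeastI)
  have S0: "(\<Sum>s\<in>{a..<b}. \<mu> s) \<ge> 0" using nn by (intro sum_nonneg) auto
  show "(\<Sum>s\<in>{a..m}. \<mu> s) \<ge> (\<Sum>s\<in>{a..<b}. \<mu> s) / 2"
  proof (cases "m = b - 1")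
    case True
    then have "{a..m} = {a..<b}" using ab by auto
    then show ?thesis using S0 by simp
  next
    case False then show ?thesis using P unfolding Q_def by auto
  qed
  assume am: "a < m"
  have "m - 1 < Least Q" using am mQ by simp
  then have nQ: "\<not> Q (m - 1)" by (rule not_less_Least)
  moreover have "{a..m-1} = {a..<m}" using am by auto
  ultimately show "(\<Sum>s\<in>{a..<m}. \<mu> s) < (\<Sum>s\<in>{a..<b}. \<mu> s) / 2" using am P unfolding Q_def by auto
qed

lemma sum_ge1: "\<forall>x\<in>S. (\<mu>::nat\<Rightarrow>real) x \<ge> 0 \<Longrightarrow> \<forall>x\<in>S. 1 \<le> k x \<Longrightarrow> (\<Sum>x\<in>S. \<mu> x) \<le> (\<Sum>x\<in>S. \<mu> x * real (k x))"
proof (intro sum_mono)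
  fix x assume "\<forall>x\<in>S. \<mu> x \<ge> 0" "\<forall>x\<in>S. 1 \<le> k x" "x \<in> S"
  then have "\<mu> x * 1 \<le> \<mu> x * real (k x)" by (intro mult_left_mono) auto
  then show "\<mu> x \<le> \<mu> x * real (k x)" by simp
qed

lemma sum_nn: "\<forall>x\<in>S. (\<mu>::nat\<Rightarrow>real) x \<ge> 0 \<Longrightarrow> 0 \<le> (\<Sum>x\<in>S. \<mu> x * real (k x))"
  by (intro sum_nonneg) auto

lemma main:
  "bst T \<Longrightarrow> {a..<b} \<subseteq> set_tree T \<Longrightarrow> \<forall>x\<in>{a..<b}. \<mu> x \<ge> 0 \<Longrightarrow>
   (\<Sum>x\<in>{a..<b}. \<mu> x * real (depth x (med_tree \<mu> a b)))
     \<le> 2 * (\<Sum>x\<in>{a..<b}. \<mu> x * real (dA {a..<b} x T))"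
proof (induction \<mu> a b rule: med_tree.induct)
  case (1 \<mu> a b)
  show ?case
  proof (cases "b \<le> a")
    case True then show ?thesis by simp
  next
    case False
    then have ab: "a < b" by simp
    define m where "m = med_root \<mu> a b"
    have mr: "a \<le> m" "m < b" using med_root_range[OF ab] m_def by auto
    define lt where "lt = med_tree \<mu> a m"
    define rt where "rt = med_tree \<mu> (Suc m) b"
    have tree: "med_tree \<mu> a b = Node lt m rt"
      by (subst med_tree.simps) (simp add: False lt_def rt_def m_def)
    define L where "L = {a..<m}"
    define R where "R = {Suc m..<b}"
    define I where "I = {a..<b}"
    have nnL: "\<forall>x\<in>L. \<mu> x \<ge> 0" and nnR: "\<forall>x\<in>R. \<mu> x \<ge> 0" and nnm: "\<mu> m \<ge> 0"
      using "1.prems"(3) mr unfolding L_def R_def by auto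
    have IHL: "(\<Sum>x\<in>L. \<mu> x * real (depth x lt)) \<le> 2 * (\<Sum>x\<in>L. \<mu> x * real (dA L x T))"
      unfolding L_def lt_def m_def
      by (rule "1.IH"(1)) (use False "1.prems" mr m_def in auto)
    have IHR: "(\<Sum>x\<in>R. \<mu> x * real (depth x rt)) \<le> 2 * (\<Sum>x\<in>R. \<mu> x * real (dA R x T))"
      unfolding R_def rt_def m_def
      by (rule "1.IH"(2)) (use False "1.prems" mr m_def in auto)
    have f1: "(\<Sum>x\<in>L. \<mu> x * real (depth x (Node lt m rt))) = (\<Sum>x\<in>L. \<mu> x) + (\<Sum>x\<in>L. \<mu> x * real (depth x lt))"
    proof -
      have "(\<Sum>x\<in>L. \<mu> x * real (depth x (Node lt m rt))) = (\<Sum>x\<in>L. \<mu> x + \<mu> x * real (depth x lt))"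
        by (rule sum.cong) (auto simp: L_def algebra_simps)
      then show ?thesis by (simp add: sum.distrib)
    qed
    have f2: "(\<Sum>x\<in>R. \<mu> x * real (depth x (Node lt m rt))) = (\<Sum>x\<in>R. \<mu> x) + (\<Sum>x\<in>R. \<mu> x * real (depth x rt))"
    proof -
      have "(\<Sum>x\<in>R. \<mu> x * real (depth x (Node lt m rt))) = (\<Sum>x\<in>R. \<mu> x + \<mu> x * real (depth x rt))"
        by (rule sum.cong) (auto simp: R_def algebra_simps)
      then show ?thesis by (simp add: sum.distrib)
    qed
    have lhs: "(\<Sum>x\<in>I. \<mu> x * real (depth x (med_tree \<mu> a b)))
       = (\<Sum>x\<in>L. \<mu> x) + (\<Sum>x\<in>R. \<mu> x) + (\<Sum>x\<in>L. \<mu> x * real (depth x lt)) + (\<Sum>x\<in>R. \<mu> x * real (depth x rt))"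
      unfolding tree I_def using sum_split3[OF mr, of "\<lambda>x. \<mu> x * real (depth x (Node lt m rt))"] f1 f2
      unfolding L_def R_def by simp
    define dL where "dL x = dA L x T" for x
    define dR where "dR x = dA R x T" for x
    define dm where "dm x = dA {m} x T" for x
    have dI: "dA I x T = dL x + dm x + dR x" for x
    proof -
      have "I = L \<union> ({m} \<union> R)" using mr unfolding I_def L_def R_def by auto
      moreover have "L \<inter> ({m} \<union> R) = {}" "{m} \<inter> R = {}" unfolding L_def R_def by auto
      ultimately have "dA I x T = dA L x T + dA ({m} \<union> R) x T" by (simp only: dA_union)
      also have "dA ({m} \<union> R) x T = dA {m} x T + dA R x T" using \<open>{m} \<inter> R = {}\<close> by (rule dA_union)
      finally show ?thesis unfolding dL_def dR_def dm_def by simp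
    qed
    have rhs0: "(\<Sum>x\<in>I. \<mu> x * real (dA I x T)) = (\<Sum>x\<in>I. \<mu> x * real (dL x)) + (\<Sum>x\<in>I. \<mu> x * real (dm x)) + (\<Sum>x\<in>I. \<mu> x * real (dR x))"
      unfolding dI by (simp add: sum.distrib algebra_simps)
    have sp: "(\<Sum>x\<in>I. \<mu> x * real (k x)) = (\<Sum>x\<in>L. \<mu> x * real (k x)) + \<mu> m * real (k m) + (\<Sum>x\<in>R. \<mu> x * real (k x))" for k
      unfolding I_def L_def R_def by (rule sum_split3[OF mr])
    have spm: "(\<Sum>x\<in>I. \<mu> x) = (\<Sum>x\<in>L. \<mu> x) + \<mu> m + (\<Sum>x\<in>R. \<mu> x)"
      unfolding I_def L_def R_def by (rule sum_split3[OF mr])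
    have am: "(\<Sum>s\<in>{a..m}. \<mu> s) = (\<Sum>x\<in>L. \<mu> x) + \<mu> m"
    proof -
      have "{a..m} = insert m L" using mr unfolding L_def by auto
      then show ?thesis unfolding L_def by simp
    qed
    have med1: "(\<Sum>x\<in>R. \<mu> x) \<le> (\<Sum>x\<in>L. \<mu> x) + \<mu> m"
      using med_facts(1)[OF ab "1.prems"(3)] am spm unfolding I_def m_def by simp
    have med2: "(\<Sum>x\<in>L. \<mu> x) \<le> (\<Sum>x\<in>R. \<mu> x) + \<mu> m"
    proof (cases "a < m")
      case True
      then show ?thesis
        using med_facts(2)[OF ab "1.prems"(3)] spm unfolding I_def m_def L_def by simp
    next
      case False
      then have "L = {}" unfolding L_def by auto
      then show ?thesis using nnm sum_nonneg[of R \<mu>] nnR by auto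
    qed
    have dnn: "0 \<le> (\<Sum>x\<in>S. \<mu> x * real (k x))" if "S = L \<or> S = R" for S k
      using sum_nn[OF nnL] sum_nn[OF nnR] that by auto
    have nnmk: "0 \<le> \<mu> m * real (k m)" for k using nnm by simp
    have D: "0 \<le> (\<Sum>x\<in>L. \<mu> x * real (dm x))" "0 \<le> (\<Sum>x\<in>R. \<mu> x * real (dm x))"
      "0 \<le> (\<Sum>x\<in>L. \<mu> x * real (dR x))" "0 \<le> (\<Sum>x\<in>R. \<mu> x * real (dL x))"
      "0 \<le> \<mu> m * real (dm m)" "0 \<le> \<mu> m * real (dR m)" "0 \<le> \<mu> m * real (dL m)"
      using dnn nnmk by auto
    obtain r where r: "r \<in> I" "\<forall>x\<in>I. x \<noteq> r \<longrightarrow> 1 \<le> dA {r} x T"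
      using dA_root[OF "1.prems"(1) ab "1.prems"(2)] unfolding I_def by blast
    have cross: "(\<Sum>x\<in>L. \<mu> x) + (\<Sum>x\<in>R. \<mu> x) \<le>
       2 * ((\<Sum>x\<in>R. \<mu> x * real (dL x)) + \<mu> m * real (dL m) + (\<Sum>x\<in>L. \<mu> x * real (dm x)) + \<mu> m * real (dm m)
         + (\<Sum>x\<in>R. \<mu> x * real (dm x)) + (\<Sum>x\<in>L. \<mu> x * real (dR x)) + \<mu> m * real (dR m))"
    proof -
      have "r \<in> L \<or> r = m \<or> r \<in> R" using r(1) unfolding I_def L_def R_def by auto
      moreover
      { assume rL: "r \<in> L"
        have k: "1 \<le> dL x" if "x \<in> R \<or> x = m" for x
        proof -
          have "1 \<le> dA {r} x T" using r that mr rL unfolding I_def R_def L_def by auto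
          also have "\<dots> \<le> dL x" unfolding dL_def using rL by (intro dA_mono) auto
          finally show ?thesis .
        qed
        have "(\<Sum>x\<in>R. \<mu> x) \<le> (\<Sum>x\<in>R. \<mu> x * real (dL x))" using sum_ge1[OF nnR] k by auto
        moreover have "\<mu> m \<le> \<mu> m * real (dL m)" using k[of m] nnm
          by (metis mult.right_neutral mult_left_mono of_nat_1 of_nat_le_iff)
        ultimately have ?thesis using med2 nnm D by (smt (verit))
      }
      moreover
      { assume rR: "r \<in> R"
        have k: "1 \<le> dR x" if "x \<in> L \<or> x = m" for x
        proof -
          have "1 \<le> dA {r} x T" using r that mr rR unfolding I_def R_def L_def by auto
          also have "\<dots> \<le> dR x" unfolding dR_def using rR by (intro dA_mono) auto
          finally show ?thesis .
        qed
        have "(\<Sum>x\<in>L. \<mu> x) \<le> (\<Sum>x\<in>L. \<mu> x * real (dR x))" using sum_ge1[OF nnL] k by auto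
        moreover have "\<mu> m \<le> \<mu> m * real (dR m)" using k[of m] nnm
          by (metis mult.right_neutral mult_left_mono of_nat_1 of_nat_le_iff)
        ultimately have ?thesis using med1 nnm D by (smt (verit))
      }
      moreover
      { assume rm: "r = m"
        have k: "1 \<le> dm x" if "x \<in> L \<or> x \<in> R" for x
          using r that mr rm unfolding I_def R_def L_def dm_def by auto
        have "(\<Sum>x\<in>L. \<mu> x) \<le> (\<Sum>x\<in>L. \<mu> x * real (dm x))" using sum_ge1[OF nnL] k by auto
        moreover have "(\<Sum>x\<in>R. \<mu> x) \<le> (\<Sum>x\<in>R. \<mu> x * real (dm x))" using sum_ge1[OF nnR] k by auto
        moreover have "0 \<le> \<mu> m * real (k m)" for k using nnm by simp
        ultimately have ?thesis using D by (smt (verit))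
      }
      ultimately show ?thesis by blast
    qed
    have rhs: "(\<Sum>x\<in>I. \<mu> x * real (dA I x T)) = (\<Sum>x\<in>L. \<mu> x * real (dA L x T)) + (\<Sum>x\<in>R. \<mu> x * real (dA R x T)) +
       ((\<Sum>x\<in>R. \<mu> x * real (dL x)) + \<mu> m * real (dL m) + (\<Sum>x\<in>L. \<mu> x * real (dm x)) + \<mu> m * real (dm m)
         + (\<Sum>x\<in>R. \<mu> x * real (dm x)) + (\<Sum>x\<in>L. \<mu> x * real (dR x)) + \<mu> m * real (dR m))"
      unfolding rhs0 sp dL_def dR_def by simp
    show ?thesis using lhs rhs cross IHL IHR unfolding I_def by (smt (verit))
  qed
qed

lemma fin_trees: "finite A \<Longrightarrow> finite {T::'a tree. size T \<le> k \<and> set_tree T \<subseteq> A}"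
proof (induction k)
  case 0
  have "{T::'a tree. size T \<le> 0 \<and> set_tree T \<subseteq> A} \<subseteq> {Leaf}" by auto
  then show ?case using finite_subset by blast
next
  case (Suc k)
  let ?S = "{T::'a tree. size T \<le> k \<and> set_tree T \<subseteq> A}"
  have "{T::'a tree. size T \<le> Suc k \<and> set_tree T \<subseteq> A} \<subseteq> insert Leaf ((\<lambda>(l,x,r). Node l x r) ` (?S \<times> A \<times> ?S))"
  proof
    fix T assume T: "T \<in> {T::'a tree. size T \<le> Suc k \<and> set_tree T \<subseteq> A}"
    show "T \<in> insert Leaf ((\<lambda>(l,x,r). Node l x r) ` (?S \<times> A \<times> ?S))"
    proof (cases T)
      case Leaf then show ?thesis by simp
    next
      case (Node l x r)
      then have "(l,x,r) \<in> ?S \<times> A \<times> ?S" using T by auto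
      then show ?thesis using Node by (auto intro!: image_eqI[of _ _ "(l,x,r)"])
    qed
  qed
  moreover have "finite (insert Leaf ((\<lambda>(l,x,r). Node l x r) ` (?S \<times> A \<times> ?S)))"
    using Suc by auto
  ultimately show ?case using finite_subset by blast
qed

lemma finite_bsts: "finite (bsts_on n)"
proof -
  have "bsts_on n \<subseteq> {T. size T \<le> n \<and> set_tree T \<subseteq> {1..n}}"
  proof
    fix T assume "T \<in> bsts_on n"
    then have b: "bst T" and s: "set_tree T = {1..n}" unfolding bsts_on_def by auto
    have "distinct (inorder T)" using b by (simp add: bst_iff_sorted_wrt_less strict_sorted_iff)
    then have "size T = card (set_tree T)" by (metis length_inorder distinct_card set_inorder)
    then show "T \<in> {T. size T \<le> n \<and> set_tree T \<subseteq> {1..n}}" using s by simp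
  qed
  then show ?thesis using fin_trees[of "{1..n}" n] finite_subset by blast
qed

fun chain :: "nat \<Rightarrow> nat \<Rightarrow> nat tree" where
  "chain a 0 = Leaf"
| "chain a (Suc k) = Node Leaf a (chain (Suc a) k)"

lemma chain_props: "set_tree (chain a k) = {a..<a+k} \<and> bst (chain a k)"
  by (induction k arbitrary: a) auto

lemma bsts_ne: "bsts_on n \<noteq> {}"
proof -
  have "chain 1 n \<in> bsts_on n" using chain_props[of 1 n] unfolding bsts_on_def by auto
  then show ?thesis by blast
qed

lemma per_coord:
  assumes nn: "\<And>x. x \<in> {1..n} \<Longrightarrow> \<mu> x \<ge> 0" and T: "T \<in> bsts_on n"
  shows "exp_depth \<mu> n (median_bst \<mu> n) \<le> 2 * exp_depth \<mu> n T"
proof -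
  have b: "bst T" and s: "set_tree T = {1..n}" using T unfolding bsts_on_def by auto
  have e: "{1..<Suc n} = {1..n}" by auto
  have "(\<Sum>x\<in>{1..<Suc n}. \<mu> x * real (depth x (med_tree \<mu> 1 (Suc n))))
     \<le> 2 * (\<Sum>x\<in>{1..<Suc n}. \<mu> x * real (dA {1..<Suc n} x T))"
    by (rule main) (use b s nn e in auto)
  moreover have "dA {1..<Suc n} x T = depth x T" for x using s e by (intro dA_depth) auto
  ultimately show ?thesis unfolding exp_depth_def median_bst_def e by simp
qed

lemma exp_nn: "(\<And>x. x \<in> {1..n} \<Longrightarrow> \<mu> x \<ge> 0) \<Longrightarrow> 0 \<le> exp_depth \<mu> n T"
  unfolding exp_depth_def by (intro sum_nonneg) auto

theorem lemma5p17:
  fixes \<mu> :: "nat \<Rightarrow> nat \<Rightarrow> real" and d n :: nat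
  assumes nonneg: "\<And>r x. r \<in> {1..d} \<Longrightarrow> x \<in> {1..n} \<Longrightarrow> \<mu> r x \<ge> 0"
    and total: "\<And>r. r \<in> {1..d} \<Longrightarrow> (\<Sum>x\<in>{1..n}. \<mu> r x) = 1"
  shows "Delta \<mu> d n \<le> 5 * Delta_opt \<mu> d n"
proof -
  have key: "exp_depth (\<mu> r) n (median_bst (\<mu> r) n) \<le> 2 * Min (exp_depth (\<mu> r) n ` bsts_on n)
     \<and> 0 \<le> Min (exp_depth (\<mu> r) n ` bsts_on n)" if r: "r \<in> {1..d}" for r
  proof -
    have "Min (exp_depth (\<mu> r) n ` bsts_on n) \<in> exp_depth (\<mu> r) n ` bsts_on n"
      using finite_bsts bsts_ne by (intro Min_in) auto
    then obtain T where T: "T \<in> bsts_on n" and eq: "Min (exp_depth (\<mu> r) n ` bsts_on n) = exp_depth (\<mu> r) n T"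
      by auto
    show ?thesis using per_coord[OF nonneg[OF r] T] exp_nn[where T=T, OF nonneg[OF r]] eq by auto
  qed
  have "Delta \<mu> d n \<le> (\<Sum>r\<in>{1..d}. 2 * Min (exp_depth (\<mu> r) n ` bsts_on n))"
    unfolding Delta_def using key by (intro sum_mono) auto
  also have "\<dots> = 2 * Delta_opt \<mu> d n" unfolding Delta_opt_def by (simp add: sum_distrib_left)
  also have "\<dots> \<le> 5 * Delta_opt \<mu> d n"
  proof -
    have "0 \<le> Delta_opt \<mu> d n" unfolding Delta_opt_def using key by (intro sum_nonneg) auto
    then show ?thesis by simp
  qed
  finally show ?thesis .
qed

end
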